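(* Let $\varphi : D \to C$ be a monic quiver homomorphism with $V(D)\neq\emptyset$. Then $\varphi$ is mono-essential if and only if the following conditions hold: (1) the vertex map $V(\varphi)$ is bijective; (2) if $\mathrm{edges}_D(v,w)\neq\emptyset$ for some $v,w\in V(D)$, then $E(\varphi)(\mathrm{edges}_D(v,w)) = \mathrm{edges}_C(V(\varphi)(v),V(\varphi)(w))$; (3) if $\mathrm{edges}_D(v,w)=\emptyset$ for some $v,w\in V(D)$, then $|\mathrm{edges}_C(V(\varphi)(v),V(\varphi)(w))|\le 1$.
   Context: A quiver is a quadruple $(V,E,\sigma,\tau)$ with $V,E$ sets and $\sigma,\tau : E \to V$ functions (source and target). A quiver homomorphism $\varphi: G \to H$ is a pair $(V(\varphi),E(\varphi))$ of functions on vertices and edges with $V(\varphi)\circ\sigma_G=\sigma_H\circ E(\varphi)$ and $V(\varphi)\circ\tau_G=\tau_H\circ E(\varphi)$; composition is componentwise. A homomorphism is monic (a monomorphism in the category of quivers) iff both its vertex and edge maps are injective. A monic homomorphism $\varphi : D \to C$ is mono-essential if for every quiver $A$ and homomorphism $\alpha : C\to A$, $\alpha\circ\varphi$ monic implies $\alpha$ monic. For a quiver $J$ and $v,w\in V(J)$, $\mathrm{edges}_J(v,w):=\sigma_J^{-1}(v)\cap\tau_J^{-1}(w)$. *)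

theory Defs
  imports Main
begin

record ('v, 'e) quiver =
  verts :: "'v set"
  arcs  :: "'e set"
  src   :: "'e \<Rightarrow> 'v"
  tgt   :: "'e \<Rightarrow> 'v"

definition wf_quiver :: "('v, 'e, 'm) quiver_scheme \<Rightarrow> bool" where
  "wf_quiver G \<longleftrightarrow> (\<forall>e\<in>arcs G. src G e \<in> verts G \<and> tgt G e \<in> verts G)"

definition quiver_hom ::
  "('v, 'e, 'm) quiver_scheme \<Rightarrow> ('w, 'f, 'n) quiver_scheme \<Rightarrow> ('v \<Rightarrow> 'w) \<Rightarrow> ('e \<Rightarrow> 'f) \<Rightarrow> bool" where
  "quiver_hom G H fv fe \<longleftrightarrow>
     (\<forall>v\<in>verts G. fv v \<in> verts H) \<and> (\<forall>e\<in>arcs G. fe e \<in> arcs H) \<and>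
     (\<forall>e\<in>arcs G. fv (src G e) = src H (fe e) \<and> fv (tgt G e) = tgt H (fe e))"

definition monic_hom ::
  "('v, 'e, 'm) quiver_scheme \<Rightarrow> ('w, 'f, 'n) quiver_scheme \<Rightarrow> ('v \<Rightarrow> 'w) \<Rightarrow> ('e \<Rightarrow> 'f) \<Rightarrow> bool" where
  "monic_hom G H fv fe \<longleftrightarrow> quiver_hom G H fv fe \<and> inj_on fv (verts G) \<and> inj_on fe (arcs G)"

text \<open>Mono-essential, with the test quivers A ranging over quivers whose vertex
  and edge types are 'x and 'y (given by the type witnesses).\<close>
definition mono_essential_at ::
  "'x itself \<Rightarrow> 'y itself \<Rightarrow> ('v, 'e) quiver \<Rightarrow> ('w, 'f) quiver \<Rightarrow> ('v \<Rightarrow> 'w) \<Rightarrow> ('e \<Rightarrow> 'f) \<Rightarrow> bool" where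
  "mono_essential_at TX TY D C fv fe \<longleftrightarrow>
     monic_hom D C fv fe \<and>
     (\<forall>(A :: ('x, 'y) quiver) av ae.
        wf_quiver A \<longrightarrow> quiver_hom C A av ae \<longrightarrow>
        monic_hom D A (av \<circ> fv) (ae \<circ> fe) \<longrightarrow> monic_hom C A av ae)"

definition edges_between :: "('v, 'e, 'm) quiver_scheme \<Rightarrow> 'v \<Rightarrow> 'v \<Rightarrow> 'e set" where
  "edges_between J v w = {e \<in> arcs J. src J e = v \<and> tgt J e = w}"

end

theory Submission
  imports Defs
begin

lemma conds_imp:
  fixes D :: "('v, 'e) quiver" and C :: "('w, 'f) quiver"
    and fv :: "'v \<Rightarrow> 'w" and fe :: "'e \<Rightarrow> 'f"
  assumes wfC: "wf_quiver C" and mon: "monic_hom D C fv fe"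
    and bij: "bij_betw fv (verts D) (verts C)"
    and c2: "\<forall>v\<in>verts D. \<forall>w\<in>verts D. edges_between D v w \<noteq> {} \<longrightarrow>
          fe ` edges_between D v w = edges_between C (fv v) (fv w)"
    and c3: "\<forall>v\<in>verts D. \<forall>w\<in>verts D. edges_between D v w = {} \<longrightarrow>
          finite (edges_between C (fv v) (fv w)) \<and> card (edges_between C (fv v) (fv w)) \<le> 1"
  shows "mono_essential_at TX TY D C fv fe"
  unfolding mono_essential_at_def
proof (intro conjI allI impI)
  show "monic_hom D C fv fe" by (fact mon)
  fix A :: "('x,'y) quiver" and av ae
  assume wfA: "wf_quiver A" and hom: "quiver_hom C A av ae"
    and m2: "monic_hom D A (av \<circ> fv) (ae \<circ> fe)"
  have injv: "inj_on av (verts C)"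
  proof (rule inj_onI)
    fix x y assume "x \<in> verts C" "y \<in> verts C" "av x = av y"
    then obtain a b where "a \<in> verts D" "b \<in> verts D" "x = fv a" "y = fv b"
      using bij unfolding bij_betw_def by blast
    then show "x = y" using m2 \<open>av x = av y\<close> unfolding monic_hom_def inj_on_def by auto
  qed
  have inje: "inj_on ae (arcs C)"
  proof (rule inj_onI)
    fix x y assume x: "x \<in> arcs C" and y: "y \<in> arcs C" and eq: "ae x = ae y"
    have "av (src C x) = av (src C y)" "av (tgt C x) = av (tgt C y)"
      using hom x y eq unfolding quiver_hom_def by metis+
    hence s: "src C x = src C y" and t: "tgt C x = tgt C y"
      using injv wfC x y unfolding wf_quiver_def inj_on_def by blast+
    obtain a where a: "a \<in> verts D" "src C x = fv a"
      using bij wfC x unfolding bij_betw_def wf_quiver_def by blast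
    obtain b where b: "b \<in> verts D" "tgt C x = fv b"
      using bij wfC x unfolding bij_betw_def wf_quiver_def by blast
    have xin: "x \<in> edges_between C (fv a) (fv b)" and yin: "y \<in> edges_between C (fv a) (fv b)"
      using x y s t a b unfolding edges_between_def by auto
    show "x = y"
    proof (cases "edges_between D a b = {}")
      case True
      with c3 a b have "finite (edges_between C (fv a) (fv b))" "card (edges_between C (fv a) (fv b)) \<le> 1"
        by auto
      then show ?thesis using xin yin by (metis card_le_Suc0_iff_eq One_nat_def)
    next
      case False
      with c2 a b have im: "fe ` edges_between D a b = edges_between C (fv a) (fv b)" by auto
      obtain dx dy where "dx \<in> edges_between D a b" "dy \<in> edges_between D a b" "x = fe dx" "y = fe dy"
        using im xin yin by (metis imageE)
      then show ?thesis using m2 eq unfolding monic_hom_def inj_on_def edges_between_def by auto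
    qed
  qed
  show "monic_hom C A av ae" using hom injv inje unfolding monic_hom_def by blast
qed

lemma collapse_edge:
  fixes D :: "('v, 'e) quiver" and C :: "('w, 'f) quiver"
    and fv :: "'v \<Rightarrow> 'w" and fe :: "'e \<Rightarrow> 'f"
  assumes wfC: "wf_quiver C" and me: "mono_essential_at TYPE('w) TYPE('f) D C fv fe"
    and e: "e \<in> arcs C" and e': "e' \<in> arcs C" and s: "src C e = src C e'" and t: "tgt C e = tgt C e'"
    and ni: "e \<notin> fe ` arcs D"
  shows "e = e'"
proof (rule ccontr)
  assume ne: "e \<noteq> e'"
  have mon: "monic_hom D C fv fe" using me unfolding mono_essential_at_def by blast
  define A :: "('w,'f) quiver" where "A = \<lparr>verts = verts C, arcs = arcs C - {e}, src = src C, tgt = tgt C\<rparr>"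
  define ae where "ae = (\<lambda>x. if x = e then e' else x)"
  have wfA: "wf_quiver A" using wfC unfolding A_def wf_quiver_def by auto
  have hom: "quiver_hom C A id ae"
    using ne e' s t unfolding A_def ae_def quiver_hom_def by auto
  have feq: "\<forall>d\<in>arcs D. ae (fe d) = fe d" using ni unfolding ae_def by auto
  have m2: "monic_hom D A (id \<circ> fv) (ae \<circ> fe)"
    using mon feq ni unfolding monic_hom_def quiver_hom_def A_def inj_on_def by auto
  have "monic_hom C A id ae" using me wfA hom m2 unfolding mono_essential_at_def by blast
  hence "inj_on ae (arcs C)" unfolding monic_hom_def by blast
  moreover have "ae e = ae e'" unfolding ae_def using ne by auto
  ultimately show False using e e' ne unfolding inj_on_def by blast
qed

lemma collapse_vert:
  fixes D :: "('v, 'e) quiver" and C :: "('w, 'f) quiver"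
    and fv :: "'v \<Rightarrow> 'w" and fe :: "'e \<Rightarrow> 'f"
  assumes wfC: "wf_quiver C" and me: "mono_essential_at TYPE('w) TYPE('f) D C fv fe"
    and c: "c \<in> verts C" and v0: "v0 \<in> verts D"
  shows "c \<in> fv ` verts D"
proof (rule ccontr)
  assume ni: "c \<notin> fv ` verts D"
  have mon: "monic_hom D C fv fe" using me unfolding mono_essential_at_def by blast
  have fv0: "fv v0 \<in> verts C" using mon v0 unfolding monic_hom_def quiver_hom_def by blast
  have ne: "c \<noteq> fv v0" using ni v0 by blast
  define av where "av = (\<lambda>x. if x = c then fv v0 else x)"
  define A :: "('w,'f) quiver" where "A = \<lparr>verts = verts C - {c}, arcs = arcs C, src = av \<circ> src C, tgt = av \<circ> tgt C\<rparr>"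
  have wfA: "wf_quiver A" using wfC fv0 ne unfolding A_def av_def wf_quiver_def by auto
  have hom: "quiver_hom C A av id"
    using fv0 ne unfolding A_def av_def quiver_hom_def by auto
  have feq: "\<forall>d\<in>verts D. av (fv d) = fv d" using ni unfolding av_def by auto
  have m2: "monic_hom D A (av \<circ> fv) (id \<circ> fe)"
    using mon feq ni unfolding monic_hom_def quiver_hom_def A_def inj_on_def by auto
  have "monic_hom C A av id" using me wfA hom m2 unfolding mono_essential_at_def by blast
  hence "inj_on av (verts C)" unfolding monic_hom_def by blast
  moreover have "av c = av (fv v0)" unfolding av_def using ne by auto
  ultimately show False using c fv0 ne unfolding inj_on_def by blast
qed

lemma in_image_edge:
  fixes D :: "('v, 'e) quiver" and C :: "('w, 'f) quiver"
  assumes wfD: "wf_quiver D" and mon: "monic_hom D C fv fe"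
    and v: "v \<in> verts D" and w: "w \<in> verts D"
    and x: "x \<in> edges_between C (fv v) (fv w)" and d: "d \<in> arcs D" and xd: "x = fe d"
  shows "d \<in> edges_between D v w"
proof -
  have "fv (src D d) = fv v" "fv (tgt D d) = fv w"
    using mon d x xd unfolding monic_hom_def quiver_hom_def edges_between_def by auto
  moreover have "src D d \<in> verts D" "tgt D d \<in> verts D" using wfD d unfolding wf_quiver_def by auto
  ultimately have "src D d = v" "tgt D d = w" using mon v w unfolding monic_hom_def inj_on_def by auto
  then show ?thesis using d unfolding edges_between_def by auto
qed

theorem mainTheorem4:
  fixes D :: "('v, 'e) quiver" and C :: "('w, 'f) quiver"
    and fv :: "'v \<Rightarrow> 'w" and fe :: "'e \<Rightarrow> 'f"
  assumes "wf_quiver D" and "wf_quiver C"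
    and "monic_hom D C fv fe"
    and "verts D \<noteq> {}"
  defines "conds \<equiv>
      bij_betw fv (verts D) (verts C) \<and>
      (\<forall>v\<in>verts D. \<forall>w\<in>verts D. edges_between D v w \<noteq> {} \<longrightarrow>
          fe ` edges_between D v w = edges_between C (fv v) (fv w)) \<and>
      (\<forall>v\<in>verts D. \<forall>w\<in>verts D. edges_between D v w = {} \<longrightarrow>
          finite (edges_between C (fv v) (fv w)) \<and> card (edges_between C (fv v) (fv w)) \<le> 1)"
  shows "(mono_essential_at TYPE('w) TYPE('f) D C fv fe \<longleftrightarrow> conds)
     \<and> (conds \<longrightarrow> mono_essential_at TYPE('x) TYPE('y) D C fv fe)"
proof -
  have gen: "conds \<Longrightarrow> mono_essential_at TX TY D C fv fe" for TX TY
    unfolding conds_def using conds_imp[OF assms(2,3)] by blast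
  have fwd: conds if me: "mono_essential_at TYPE('w) TYPE('f) D C fv fe"
  proof -
    obtain v0 where v0: "v0 \<in> verts D" using assms(4) by blast
    have "verts C \<subseteq> fv ` verts D" using collapse_vert[OF assms(2) me _ v0] by blast
    moreover have "fv ` verts D \<subseteq> verts C" using assms(3) unfolding monic_hom_def quiver_hom_def by blast
    ultimately have b: "bij_betw fv (verts D) (verts C)"
      using assms(3) unfolding monic_hom_def bij_betw_def by blast
    have sub: "fe ` edges_between D v w \<subseteq> edges_between C (fv v) (fv w)" for v w
      using assms(3) unfolding monic_hom_def quiver_hom_def edges_between_def by auto
    have notim: "x \<notin> fe ` arcs D"
      if "v \<in> verts D" "w \<in> verts D" "x \<in> edges_between C (fv v) (fv w)" "x \<notin> fe ` edges_between D v w" for v w x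
      using in_image_edge[OF assms(1,3) that(1,2,3)] that(4) by blast
    have e2: "fe ` edges_between D v w = edges_between C (fv v) (fv w)"
      if v: "v \<in> verts D" and w: "w \<in> verts D" and ne: "edges_between D v w \<noteq> {}" for v w
    proof (rule equalityI[OF sub], rule subsetI, rule ccontr)
      fix x assume x: "x \<in> edges_between C (fv v) (fv w)" and nx: "x \<notin> fe ` edges_between D v w"
      obtain d where d: "d \<in> edges_between D v w" using ne by blast
      have "fe d \<in> edges_between C (fv v) (fv w)" using sub d by blast
      hence "x = fe d"
        using collapse_edge[OF assms(2) me, of x "fe d"] notim[OF v w x nx] x
        unfolding edges_between_def by auto
      thus False using nx d by blast
    qed
    have e3: "finite (edges_between C (fv v) (fv w)) \<and> card (edges_between C (fv v) (fv w)) \<le> 1"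
      if v: "v \<in> verts D" and w: "w \<in> verts D" and em: "edges_between D v w = {}" for v w
    proof -
      have "\<forall>x\<in>edges_between C (fv v) (fv w). \<forall>y\<in>edges_between C (fv v) (fv w). x = y"
      proof (intro ballI)
        fix x y assume x: "x \<in> edges_between C (fv v) (fv w)" and y: "y \<in> edges_between C (fv v) (fv w)"
        show "x = y"
          using collapse_edge[OF assms(2) me, of x y] notim[OF v w x] x y em
          unfolding edges_between_def by auto
      qed
      then have "edges_between C (fv v) (fv w) = {} \<or> (\<exists>z. edges_between C (fv v) (fv w) = {z})"
        by blast
      then show ?thesis by auto
    qed
    show conds unfolding conds_def using b e2 e3 by blast
  qed
  show ?thesis using gen[of "TYPE('w)" "TYPE('f)"] gen[of "TYPE('x)" "TYPE('y)"] fwd by blast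
qed

end
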